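(* Let $\{\Delta_1,\dots,\Delta_r\}$ be a nef-partition of a reflexive polytope $\Delta$ with dual nef-partition $\{\nabla_1,\dots,\nabla_r\}$, let $i\in J\subset I=\{1,\dots,r\}$. Then a nonzero lattice point $w\in M$ lies in the relative interior of $\Delta_i+\sum_{j\in J}\Delta_j$ (where $\Delta_i$ appears twice) if and only if $w\in\Delta_i^0$ and $0$ lies in the relative interior of $\sum_{j\notin J}\nabla_j(w)$ (an empty sum being $\{0\}$). Moreover, in this case $$\dim\Big(\Delta_i+\sum_{j\in J}\Delta_j\Big)+\dim\Big(\sum_{j\notin J}\nabla_j(w)\Big)=d.$$
   Context: Let $M\cong\mathbb Z^d$, $N=\mathrm{Hom}(M,\mathbb Z)$, $\langle\cdot,\cdot\rangle$ the pairing. A $d$-dimensional lattice polytope $\Delta\subset M_{\mathbb R}$ is reflexive if $\Delta=\{x:\langle x,e_k\rangle\ge-1,\ k=1,\dots,n\}$ with $e_k\in N$ the primitive inward facet normals. A nef-partition is a Minkowski decomposition $\Delta=\Delta_1+\dots+\Delta_r$ into lattice polytopes with $\varphi_j(e_k)\in\{0,1\}$ for all $j,k$, $\varphi_j(y)=-\min_{x\in\Delta_j}\langle x,y\rangle$; the dual nef-partition consists of $\nabla_j=\mathrm{Conv}(\{0\}\cup\{e_k:\varphi_j(e_k)=1\})\subset N_{\mathbb R}$, and $\nabla^*=\mathrm{Conv}(\Delta_1\cup\dots\cup\Delta_r)$ is a reflexive polytope. Put $\mathcal V(\nabla^* )=\partial\nabla^*\cap M$ and $\Delta_i^0=\Delta_i\cap\mathcal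 V(\nabla^* )$. For $w\in M$, $\nabla_j(w)$ denotes the face of $\nabla_j$ on which $\langle w,\cdot\rangle$ attains its minimum. *)

theory Defs
  imports "HOL-Analysis.Analysis"
begin

(* M and N are both modelled as the integer points of real^'d; the pairing <x,y> is the
   standard inner product x \<bullet> y.  Minkowski sums use the set-sum instance of
   HOL-Library.Set_Algebras (imported by Analysis); an empty sum is {0}. *)

definition lattice_pt :: "real^'d \<Rightarrow> bool" where
  "lattice_pt x \<longleftrightarrow> (\<forall>i. x $ i \<in> \<int>)"

definition primitive_pt :: "real^'d \<Rightarrow> bool" where
  "primitive_pt v \<longleftrightarrow> lattice_pt v \<and> v \<noteq> 0 \<and>
     (\<forall>k::int. k > 1 \<longrightarrow> \<not> lattice_pt ((1 / real_of_int k) *\<^sub>R v))"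

definition lattice_polytope :: "(real^'d) set \<Rightarrow> bool" where
  "lattice_polytope P \<longleftrightarrow>
     (\<exists>S. finite S \<and> S \<noteq> {} \<and> (\<forall>x\<in>S. lattice_pt x) \<and> P = convex hull S)"

definition facet_normals :: "(real^'d) set \<Rightarrow> (real^'d) set" where
  "facet_normals P = {e. primitive_pt e \<and>
     (\<exists>F. F facet_of P \<and> (\<forall>x\<in>F. \<forall>y\<in>P. x \<bullet> e \<le> y \<bullet> e))}"

definition reflexive_polytope :: "(real^'d) set \<Rightarrow> bool" where
  "reflexive_polytope P \<longleftrightarrow> lattice_polytope P \<and> aff_dim P = int CARD('d) \<and>
     P = {x. \<forall>e\<in>facet_normals P. x \<bullet> e \<ge> -1}"

definition supp_phi :: "(real^'d) set \<Rightarrow> real^'d \<Rightarrow> real" where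
  "supp_phi P y = - (INF x\<in>P. x \<bullet> y)"

definition nef_partition :: "(real^'d) set \<Rightarrow> (nat \<Rightarrow> (real^'d) set) \<Rightarrow> nat \<Rightarrow> bool" where
  "nef_partition P Ds r \<longleftrightarrow>
     (\<forall>j\<in>{1..r}. lattice_polytope (Ds j)) \<and>
     P = (\<Sum>j\<in>{1..r}. Ds j) \<and>
     (\<forall>j\<in>{1..r}. \<forall>e\<in>facet_normals P. supp_phi (Ds j) e \<in> {0, 1})"

definition nabla :: "(real^'d) set \<Rightarrow> (nat \<Rightarrow> (real^'d) set) \<Rightarrow> nat \<Rightarrow> (real^'d) set" where
  "nabla P Ds j = convex hull ({0} \<union> {e\<in>facet_normals P. supp_phi (Ds j) e = 1})"

definition nabla_face :: "(real^'d) set \<Rightarrow> (nat \<Rightarrow> (real^'d) set) \<Rightarrow> nat \<Rightarrow> real^'d \<Rightarrow> (real^'d) set" where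
  "nabla_face P Ds j w = {y\<in>nabla P Ds j. \<forall>z\<in>nabla P Ds j. w \<bullet> y \<le> w \<bullet> z}"

definition nabla_star :: "(nat \<Rightarrow> (real^'d) set) \<Rightarrow> nat \<Rightarrow> (real^'d) set" where
  "nabla_star Ds r = convex hull (\<Union>j\<in>{1..r}. Ds j)"

definition Delta0 :: "(nat \<Rightarrow> (real^'d) set) \<Rightarrow> nat \<Rightarrow> nat \<Rightarrow> (real^'d) set" where
  "Delta0 Ds r i = Ds i \<inter> {x. x \<in> frontier (nabla_star Ds r) \<and> lattice_pt x}"

end

theory Submission
  imports Defs
begin

lemma sum_set_mem:
  fixes D :: "'i \<Rightarrow> 'a::comm_monoid_add set"
  assumes "finite I" "\<forall>j\<in>I. a j \<in> D j"
  shows "(\<Sum>j\<in>I. a j) \<in> (\<Sum>j\<in>I. D j)"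
  using assms by (induction I rule: finite_induct) auto

lemma sum_set_elim:
  fixes D :: "'i \<Rightarrow> 'a::comm_monoid_add set"
  assumes "finite I" "x \<in> (\<Sum>j\<in>I. D j)"
  shows "\<exists>a. (\<forall>j\<in>I. a j \<in> D j) \<and> x = (\<Sum>j\<in>I. a j)"
  using assms
proof (induction I arbitrary: x rule: finite_induct)
  case empty
  then show ?case by auto
next
  case (insert k I)
  from insert.prems insert.hyps have "x \<in> D k + (\<Sum>j\<in>I. D j)" by simp
  then obtain u v where uv: "x = u + v" "u \<in> D k" "v \<in> (\<Sum>j\<in>I. D j)"
    by (rule set_plus_elim)
  from insert.IH[OF uv(3)] obtain a where a: "\<forall>j\<in>I. a j \<in> D j" "v = (\<Sum>j\<in>I. a j)" by blast
  define b where "b = a(k := u)"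
  have "(\<Sum>j\<in>I. b j) = (\<Sum>j\<in>I. a j)"
    using insert.hyps by (intro sum.cong) (auto simp: b_def)
  then have "x = (\<Sum>j\<in>insert k I. b j)"
    using insert.hyps uv a by (simp add: b_def)
  moreover have "\<forall>j\<in>insert k I. b j \<in> D j" using a uv insert.hyps by (auto simp: b_def)
  ultimately show ?case by blast
qed

lemma compact_set_plus:
  fixes A B :: "'a::real_normed_vector set"
  assumes "compact A" "compact B" shows "compact (A + B)"
proof -
  have "A + B = {x + y | x y. x \<in> A \<and> y \<in> B}" by (auto simp: set_plus_def)
  then show ?thesis using compact_sums[OF assms] by simp
qed

lemma compact_set_sum:
  fixes D :: "'i \<Rightarrow> 'a::real_normed_vector set"
  assumes "finite I" "\<forall>j\<in>I. compact (D j)"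
  shows "compact (\<Sum>j\<in>I. D j)"
  using assms by (induction I rule: finite_induct) (auto intro: compact_set_plus)

lemma convex_set_sum:
  fixes D :: "'i \<Rightarrow> 'a::real_vector set"
  assumes "finite I" "\<forall>j\<in>I. convex (D j)"
  shows "convex (\<Sum>j\<in>I. D j)"
  using assms by (induction I rule: finite_induct) (auto intro: convex_set_plus)

lemma nonempty_set_sum:
  fixes D :: "'i \<Rightarrow> 'a::comm_monoid_add set"
  assumes "finite I" "\<forall>j\<in>I. D j \<noteq> {}"
  shows "(\<Sum>j\<in>I. D j) \<noteq> {}"
proof -
  have "\<forall>j\<in>I. (SOME x. x \<in> D j) \<in> D j" using assms(2) by (simp add: some_in_eq)
  from sum_set_mem[OF assms(1) this] show ?thesis by auto
qed

lemma subset_set_sum: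
  fixes D :: "'i \<Rightarrow> 'a::comm_monoid_add set"
  assumes "finite I" "\<forall>j\<in>I. 0 \<in> D j" "k \<in> I"
  shows "D k \<subseteq> (\<Sum>j\<in>I. D j)"
proof
  fix x assume x: "x \<in> D k"
  define a where "a = (\<lambda>j. if j = k then x else 0)"
  have "\<forall>j\<in>I. a j \<in> D j" using assms x by (auto simp: a_def)
  from sum_set_mem[OF assms(1) this] have "(\<Sum>j\<in>I. a j) \<in> (\<Sum>j\<in>I. D j)" .
  moreover have "(\<Sum>j\<in>I. a j) = x" using assms(1,3) by (simp add: a_def)
  ultimately show "x \<in> (\<Sum>j\<in>I. D j)" by simp
qed

lemma zero_set_sum:
  fixes D :: "'i \<Rightarrow> 'a::comm_monoid_add set"
  assumes "finite I" "\<forall>j\<in>I. 0 \<in> D j"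
  shows "0 \<in> (\<Sum>j\<in>I. D j)"
  using sum_set_mem[OF assms(1), of "\<lambda>j. 0" D] assms by simp

lemma perturb:
  fixes w z :: "'a::euclidean_space"
  assumes "finite E" "\<forall>e\<in>E. c e \<le> w \<bullet> e" "\<forall>e\<in>E. w \<bullet> e = c e \<longrightarrow> 0 \<le> z \<bullet> e"
  shows "\<exists>t>0. \<forall>e\<in>E. c e \<le> (w + t *\<^sub>R z) \<bullet> e"
proof -
  have ev: "\<forall>e\<in>E. eventually (\<lambda>t. c e \<le> (w + t *\<^sub>R z) \<bullet> e) (at_right (0::real))"
  proof
    fix e assume e: "e \<in> E"
    show "eventually (\<lambda>t. c e \<le> (w + t *\<^sub>R z) \<bullet> e) (at_right (0::real))"
    proof (cases "w \<bullet> e = c e")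
      case True
      then have "0 \<le> z \<bullet> e" using assms(3) e by auto
      show ?thesis using eventually_at_right_less[of "0::real"]
      proof (rule eventually_mono)
        fix t :: real assume "0 < t"
        then have "0 \<le> t * (z \<bullet> e)" using \<open>0 \<le> z \<bullet> e\<close> by simp
        then show "c e \<le> (w + t *\<^sub>R z) \<bullet> e" using True by (simp add: inner_add_left)
      qed
    next
      case False
      then have lt: "c e < w \<bullet> e" using assms(2) e by force
      have "((\<lambda>t. w \<bullet> e + t * (z \<bullet> e)) \<longlongrightarrow> w \<bullet> e + 0 * (z \<bullet> e)) (at_right (0::real))"
        by (intro tendsto_intros)
      then have "((\<lambda>t. (w + t *\<^sub>R z) \<bullet> e) \<longlongrightarrow> w \<bullet> e) (at_right (0::real))"
        by (simp add: inner_add_left)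
      from order_tendstoD(1)[OF this lt] show ?thesis
        by (rule eventually_mono) simp
    qed
  qed
  have "eventually (\<lambda>t. 0 < t \<and> (\<forall>e\<in>E. c e \<le> (w + t *\<^sub>R z) \<bullet> e)) (at_right (0::real))"
    using eventually_at_right_less[of "0::real"] eventually_ball_finite[OF assms(1) ev]
    by (rule eventually_conj)
  from eventually_happens'[OF _ this] show ?thesis by auto
qed

lemma convex_cone_halfspace: "convex_cone {y. 0 \<le> v \<bullet> (y::'a::real_inner)}"
  unfolding convex_cone_iff by (simp add: inner_add_right)

lemma convex_cone_hull_ge:
  fixes v :: "'a::real_inner"
  assumes "y \<in> convex_cone hull S" "\<forall>e\<in>S. 0 \<le> v \<bullet> e"
  shows "0 \<le> v \<bullet> y"
proof -
  have "convex_cone hull S \<subseteq> {y. 0 \<le> v \<bullet> y}"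
    using assms(2) by (intro hull_minimal convex_cone_halfspace) auto
  then show ?thesis using assms(1) by auto
qed

lemma separate_cone:
  fixes y :: "'a::euclidean_space"
  assumes "finite S" "y \<notin> convex_cone hull S"
  shows "\<exists>a. a \<bullet> y < 0 \<and> (\<forall>e\<in>S. 0 \<le> a \<bullet> e)"
proof -
  let ?C = "convex_cone hull S"
  have "closed ?C" using assms(1) by (rule closed_convex_cone_hull)
  moreover have "convex ?C" by (rule convex_convex_cone_hull)
  ultimately obtain a b where ab: "a \<bullet> y < b" "\<forall>x\<in>?C. b < a \<bullet> x"
    using separating_hyperplane_closed_point assms(2) by blast
  have b0: "b < 0" using ab(2) convex_cone_hull_contains_0 by fastforce
  have nn: "0 \<le> a \<bullet> x" if "x \<in> ?C" for x
  proof (rule ccontr)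
    assume "\<not> 0 \<le> a \<bullet> x"
    then have neg: "a \<bullet> x < 0" by simp
    define t where "t = 2 * b / (a \<bullet> x)"
    have "t \<ge> 0" using neg b0 by (simp add: t_def divide_nonpos_neg)
    then have "t *\<^sub>R x \<in> ?C" using convex_cone_hull_mul that by blast
    moreover have "a \<bullet> (t *\<^sub>R x) = 2 * b" using neg by (simp add: t_def)
    ultimately show False using ab(2) b0 by fastforce
  qed
  have "\<forall>e\<in>S. 0 \<le> a \<bullet> e" using nn hull_inc[of _ S convex_cone] by blast
  then show ?thesis using ab(1) b0 by (intro exI[of _ a]) auto
qed

lemma kkt:
  fixes y p :: "'a::euclidean_space"
  assumes "finite E" "PP = {x. \<forall>e\<in>E. c e \<le> x \<bullet> e}" "p \<in> PP" "\<forall>q\<in>PP. p \<bullet> y \<le> q \<bullet> y"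
  shows "y \<in> convex_cone hull {e\<in>E. p \<bullet> e = c e}"
proof (rule ccontr)
  assume "y \<notin> convex_cone hull {e\<in>E. p \<bullet> e = c e}"
  then obtain a where a: "a \<bullet> y < 0" "\<forall>e\<in>{e\<in>E. p \<bullet> e = c e}. 0 \<le> a \<bullet> e"
    using separate_cone[of "{e\<in>E. p \<bullet> e = c e}" y] assms(1) by auto
  have "\<forall>e\<in>E. c e \<le> p \<bullet> e" using assms(2,3) by auto
  then obtain t where t: "t > 0" "\<forall>e\<in>E. c e \<le> (p + t *\<^sub>R a) \<bullet> e"
    using perturb[OF assms(1), of c p a] a(2) by auto
  then have "p + t *\<^sub>R a \<in> PP" using assms(2) by auto
  then have "p \<bullet> y \<le> (p + t *\<^sub>R a) \<bullet> y" using assms(4) by auto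
  moreover have "(p + t *\<^sub>R a) \<bullet> y = p \<bullet> y + t * (a \<bullet> y)" by (simp add: inner_add_left)
  moreover have "t * (a \<bullet> y) < 0" using t(1) a(1) by (simp add: mult_pos_neg)
  ultimately show False by linarith
qed

lemma summand_hrep:
  fixes A B PP :: "'a::euclidean_space set"
  assumes "finite E" "convex A" "closed A" "A + B = PP" "compact PP" "PP \<noteq> {}"
    "PP = {x. \<forall>e\<in>E. c e \<le> x \<bullet> e}" "\<forall>e\<in>E. \<exists>q\<in>A. q \<bullet> e \<le> x \<bullet> e"
  shows "x \<in> A"
proof (rule ccontr)
  assume "x \<notin> A"
  then obtain a b where ab: "a \<bullet> x < b" "\<forall>y\<in>A. b < a \<bullet> y"
    using separating_hyperplane_closed_point assms(2,3) by blast
  have "continuous_on PP (\<lambda>q. q \<bullet> a)" by (intro continuous_intros)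
  then obtain p where p: "p \<in> PP" "\<forall>q\<in>PP. p \<bullet> a \<le> q \<bullet> a"
    using continuous_attains_inf[OF assms(5,6)] by blast
  then obtain p1 p2 where pp: "p = p1 + p2" "p1 \<in> A" "p2 \<in> B"
    using assms(4) set_plus_elim by blast
  have cone: "a \<in> convex_cone hull {e\<in>E. p \<bullet> e = c e}"
    using kkt[OF assms(1,7) p] .
  have "\<forall>e\<in>{e\<in>E. p \<bullet> e = c e}. 0 \<le> (x - p1) \<bullet> e"
  proof
    fix e assume e: "e \<in> {e\<in>E. p \<bullet> e = c e}"
    obtain q where q: "q \<in> A" "q \<bullet> e \<le> x \<bullet> e" using assms(8) e by auto
    have "q + p2 \<in> PP" using assms(4) q(1) pp(3) by blast
    then have "c e \<le> (q + p2) \<bullet> e" using assms(7) e by auto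
    then have "p1 \<bullet> e \<le> q \<bullet> e" using e pp(1) by (simp add: inner_add_left)
    then show "0 \<le> (x - p1) \<bullet> e" using q(2) by (simp add: inner_diff_left)
  qed
  from convex_cone_hull_ge[OF cone this] have "p1 \<bullet> a \<le> x \<bullet> a" by (simp add: inner_diff_left)
  moreover have "b < a \<bullet> p1" using ab(2) pp(2) by blast
  ultimately show False using ab(1) by (simp add: inner_commute)
qed

lemma facet_normal_parallel:
  fixes P F :: "'a::euclidean_space set"
  assumes "aff_dim P = DIM('a)" "F facet_of P" "e \<noteq> 0" "e' \<noteq> 0"
   "\<forall>x\<in>F. \<forall>y\<in>P. x \<bullet> e \<le> y \<bullet> e" "\<forall>x\<in>F. \<forall>y\<in>P. x \<bullet> e' \<le> y \<bullet> e'"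
  shows "\<exists>l>0. e' = l *\<^sub>R e"
proof -
  have FP: "F \<subseteq> P" using assms(2) facet_of_imp_subset by blast
  obtain f0 where f0: "f0 \<in> F" using assms(2) unfolding facet_of_def by blast
  have adF: "aff_dim F = DIM('a) - 1" using assms(1,2) unfolding facet_of_def by simp
  have const: "F \<subseteq> {x. v \<bullet> x = v \<bullet> f0}" if "\<forall>x\<in>F. \<forall>y\<in>P. x \<bullet> v \<le> y \<bullet> v" for v
  proof
    fix x assume "x \<in> F"
    then have "x \<bullet> v \<le> f0 \<bullet> v" "f0 \<bullet> v \<le> x \<bullet> v" using that f0 FP by auto
    then show "x \<in> {x. v \<bullet> x = v \<bullet> f0}" by (simp add: inner_commute)
  qed
  let ?H = "{x. e \<bullet> x = e \<bullet> f0}"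
  have "affine hull F = ?H"
  proof (rule affine_dim_equal)
    show "affine (affine hull F)" by simp
    show "affine ?H" by (rule affine_hyperplane)
    show "affine hull F \<noteq> {}" using f0 by auto
    show "affine hull F \<subseteq> ?H" using const[OF assms(5)] by (intro hull_minimal affine_hyperplane)
    show "aff_dim (affine hull F) = aff_dim ?H" using adF assms(3) by simp
  qed
  moreover have "affine hull F \<subseteq> {x. e' \<bullet> x = e' \<bullet> f0}"
    using const[OF assms(6)] by (intro hull_minimal affine_hyperplane)
  ultimately have HH: "?H \<subseteq> {x. e' \<bullet> x = e' \<bullet> f0}" by simp
  define k where "k = (e' \<bullet> e) / (e \<bullet> e)"
  define v where "v = e' - k *\<^sub>R e"
  have ee: "e \<bullet> e \<noteq> 0" using assms(3) by simp
  have ev: "e \<bullet> v = 0" using ee by (simp add: v_def k_def inner_diff_right inner_commute)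
  then have "f0 + v \<in> ?H" by (simp add: inner_add_right)
  then have "e' \<bullet> (f0 + v) = e' \<bullet> f0" using HH by auto
  then have "e' \<bullet> v = 0" by (simp add: inner_add_right)
  then have "v \<bullet> v = 0" using ev by (simp add: v_def inner_diff_left inner_commute)
  then have "v = 0" by simp
  then have e'k: "e' = k *\<^sub>R e" by (simp add: v_def)
  have "k \<noteq> 0" using assms(4) e'k by auto
  have "\<not> P \<subseteq> ?H"
  proof
    assume "P \<subseteq> ?H"
    then have "aff_dim P \<le> aff_dim ?H" by (rule aff_dim_subset)
    then show False using assms(1,3) by simp
  qed
  then obtain q where q: "q \<in> P" "e \<bullet> q \<noteq> e \<bullet> f0" by auto
  have "f0 \<bullet> e \<le> q \<bullet> e" using assms(5) f0 q(1) by auto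
  then have qlt: "f0 \<bullet> e < q \<bullet> e" using q(2) by (simp add: inner_commute)
  have "f0 \<bullet> e' \<le> q \<bullet> e'" using assms(6) f0 q(1) by auto
  then have "k * (f0 \<bullet> e) \<le> k * (q \<bullet> e)" using e'k by simp
  then have "k > 0" using qlt \<open>k \<noteq> 0\<close>
    by (metis linorder_neqE_linordered_idom mult_le_cancel_left not_le)
  then show ?thesis using e'k by blast
qed

lemma lattice_inner_Ints:
  fixes x y :: "real^'d"
  assumes "lattice_pt x" "lattice_pt y" shows "x \<bullet> y \<in> \<int>"
  using assms unfolding lattice_pt_def inner_vec_def
  by (intro Ints_sum) (simp add: Ints_mult)

lemma primitive_lattice: "primitive_pt v \<Longrightarrow> lattice_pt v"
  by (simp add: primitive_pt_def)

lemma primitive_nonzero: "primitive_pt v \<Longrightarrow> v \<noteq> 0"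
  by (simp add: primitive_pt_def)

lemma coprime_div_Ints:
  fixes m n :: nat and a b :: int
  assumes "coprime m n" "n \<noteq> 0" "real n * of_int b = real m * of_int a"
  shows "of_int a / real n \<in> \<int>"
proof -
  have "of_int (int n * b) = (of_int (int m * a) :: real)" using assms(3) by simp
  then have eq: "int n * b = int m * a" by (simp only: of_int_eq_iff)
  have "coprime (int n) (int m)" using assms(1) by (simp add: coprime_commute)
  moreover have "int n dvd int m * a" using eq by (metis dvd_triv_left)
  ultimately have "int n dvd a" using coprime_dvd_mult_right_iff by blast
  then obtain c where "a = int n * c" by (auto elim: dvdE)
  then have "of_int a / real n = of_int c" using assms(2) by simp
  then show ?thesis by simp
qed

lemma primitive_parallel_eq:
  fixes e e' :: "real^'d"
  assumes "primitive_pt e" "primitive_pt e'" "e' = l *\<^sub>R e" "l > 0"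
  shows "e' = e"
proof -
  have le: "lattice_pt e" and le': "lattice_pt e'" using assms primitive_lattice by auto
  have "e \<noteq> 0" using assms(1) primitive_nonzero by auto
  then obtain k where k: "e $ k \<noteq> 0" by (metis vec_eq_iff zero_index)
  have "e' $ k = l * e $ k" using assms(3) by simp
  then have lk: "l = e' $ k / e $ k" using k by simp
  have "e $ k \<in> \<int>" "e' $ k \<in> \<int>" using le le' unfolding lattice_pt_def by auto
  then have "l \<in> \<rat>" unfolding lk by (metis Ints_subset_Rats Rats_divide subsetD)
  then obtain m n :: nat where mn: "n \<noteq> 0" "\<bar>l\<bar> = real m / real n" "coprime m n"
    by (rule Rats_abs_nat_div_natE)
  have lmn: "l = real m / real n" using mn(2) assms(4) by simp
  have comp: "real n * e' $ j = real m * e $ j" for j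
    using assms(3) mn(1) by (simp add: lmn)
  have "lattice_pt ((1 / real_of_int (int n)) *\<^sub>R e)"
    unfolding lattice_pt_def
  proof
    fix j
    obtain a where a: "e $ j = of_int a" using le unfolding lattice_pt_def by (metis Ints_cases)
    obtain b where b: "e' $ j = of_int b" using le' unfolding lattice_pt_def by (metis Ints_cases)
    have "of_int a / real n \<in> \<int>"
      using coprime_div_Ints[OF mn(3,1)] comp[of j] a b by simp
    then show "((1 / real_of_int (int n)) *\<^sub>R e) $ j \<in> \<int>" using a by simp
  qed
  then have "\<not> int n > 1" using assms(1) unfolding primitive_pt_def by blast
  then have n1: "n = 1" using mn(1) by simp
  have "(1 / real_of_int (int m)) *\<^sub>R e' = e"
  proof -
    have "m \<noteq> 0" using lmn assms(4) by (cases "m = 0") auto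
    then show ?thesis using assms(3) lmn n1 by simp
  qed
  then have "lattice_pt ((1 / real_of_int (int m)) *\<^sub>R e')" using le by simp
  then have "\<not> int m > 1" using assms(2) unfolding primitive_pt_def by blast
  moreover have "m \<noteq> 0" using lmn assms(4) by (cases "m = 0") auto
  ultimately have "m = 1" by simp
  then show ?thesis using assms(3) lmn n1 by simp
qed

lemma finite_facet_normals:
  fixes P :: "(real^'d) set"
  assumes "polytope P" "aff_dim P = int CARD('d)"
  shows "finite (facet_normals P)"
proof -
  let ?E = "facet_normals P"
  define f where "f e = (SOME F. F facet_of P \<and> (\<forall>x\<in>F. \<forall>y\<in>P. x \<bullet> e \<le> y \<bullet> e))" for e
  have fe: "f e facet_of P \<and> (\<forall>x\<in>f e. \<forall>y\<in>P. x \<bullet> e \<le> y \<bullet> e)" if "e \<in> ?E" for e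
  proof -
    from that obtain F where "F facet_of P \<and> (\<forall>x\<in>F. \<forall>y\<in>P. x \<bullet> e \<le> y \<bullet> e)"
      unfolding facet_normals_def by auto
    then show ?thesis unfolding f_def by (rule someI)
  qed
  have "f ` ?E \<subseteq> {F. F facet_of P}" using fe by auto
  then have fin: "finite (f ` ?E)" using finite_polytope_facets[OF assms(1)] finite_subset by blast
  have "inj_on f ?E"
  proof
    fix e e' assume e: "e \<in> ?E" and e': "e' \<in> ?E" and eq: "f e = f e'"
    have pe: "primitive_pt e" "primitive_pt e'" using e e' unfolding facet_normals_def by auto
    have "aff_dim P = DIM(real^'d)" using assms(2) by simp
    from facet_normal_parallel[OF this, of "f e" e e'] fe[OF e] fe[OF e'] eq pe
    obtain l where "l > 0" "e' = l *\<^sub>R e" using primitive_nonzero by metis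
    then show "e = e'" using primitive_parallel_eq pe by metis
  qed
  then show ?thesis using fin finite_imageD by blast
qed

definition minv :: "(real^'d) set \<Rightarrow> real^'d \<Rightarrow> real" where
  "minv K e = Inf ((\<lambda>x. x \<bullet> e) ` K)"

lemma minv_attained:
  fixes K :: "(real^'d) set"
  assumes "compact K" "K \<noteq> {}"
  shows "\<exists>a\<in>K. a \<bullet> e = minv K e \<and> (\<forall>x\<in>K. minv K e \<le> x \<bullet> e)"
proof -
  have "continuous_on K (\<lambda>x. x \<bullet> e)" by (intro continuous_intros)
  then obtain a where a: "a \<in> K" "\<forall>y\<in>K. a \<bullet> e \<le> y \<bullet> e"
    using continuous_attains_inf[OF assms] by blast
  have "minv K e = a \<bullet> e" unfolding minv_def using a by (intro cInf_eq_minimum) auto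
  then show ?thesis using a by auto
qed

context
  fixes P :: "(real^'d) set" and Ds :: "nat \<Rightarrow> (real^'d) set" and r :: nat
  assumes refl: "reflexive_polytope P" and nef: "nef_partition P Ds r"
begin

lemma P_facts:
  "finite (facet_normals P)" "\<forall>e\<in>facet_normals P. lattice_pt e \<and> e \<noteq> 0"
  "P = {x. \<forall>e\<in>facet_normals P. -1 \<le> x \<bullet> e}" "compact P" "P \<noteq> {}" "convex P"
  "P = (\<Sum>j\<in>{1..r}. Ds j)" "\<And>x. x \<in> P \<longleftrightarrow> (\<forall>e\<in>facet_normals P. -1 \<le> x \<bullet> e)"
proof -
  obtain S where S: "finite S" "S \<noteq> {}" "P = convex hull S"
    using refl unfolding reflexive_polytope_def lattice_polytope_def by blast
  have "polytope P" using S unfolding polytope_def by blast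
  then show "finite (facet_normals P)"
    using finite_facet_normals refl unfolding reflexive_polytope_def by blast
  show "\<forall>e\<in>facet_normals P. lattice_pt e \<and> e \<noteq> 0"
    unfolding facet_normals_def using primitive_lattice primitive_nonzero by auto
  show "P = {x. \<forall>e\<in>facet_normals P. -1 \<le> x \<bullet> e}"
    using refl reflexive_polytope_def by blast
  then show "\<And>x. x \<in> P \<longleftrightarrow> (\<forall>e\<in>facet_normals P. -1 \<le> x \<bullet> e)" by blast
  show "compact P" using S by (simp add: compact_convex_hull finite_imp_compact)
  show "P \<noteq> {}" using S by simp
  show "convex P" using S by simp
  show "P = (\<Sum>j\<in>{1..r}. Ds j)" using nef nef_partition_def by blast
qed

lemma D_facts:
  assumes "j \<in> {1..r}"
  shows "compact (Ds j)" "convex (Ds j)" "Ds j \<noteq> {}"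
proof -
  obtain S where S: "finite S" "S \<noteq> {}" "Ds j = convex hull S"
    using nef assms unfolding nef_partition_def lattice_polytope_def by blast
  show "compact (Ds j)" using S by (simp add: compact_convex_hull finite_imp_compact)
  show "Ds j \<noteq> {}" using S by simp
  show "convex (Ds j)" using S by simp
qed

lemma D_min:
  assumes "j \<in> {1..r}"
  shows "\<exists>a\<in>Ds j. a \<bullet> e = minv (Ds j) e \<and> (\<forall>x\<in>Ds j. minv (Ds j) e \<le> x \<bullet> e)"
  using minv_attained D_facts[OF assms] by blast

lemma D_minv_vals:
  assumes "j \<in> {1..r}" "e \<in> facet_normals P"
  shows "minv (Ds j) e = 0 \<or> minv (Ds j) e = -1"
  using nef assms unfolding nef_partition_def supp_phi_def minv_def by auto

lemma unique_class:
  assumes "e \<in> facet_normals P"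
  shows "\<exists>k\<in>{1..r}. minv (Ds k) e = -1 \<and> (\<forall>j\<in>{1..r}. j \<noteq> k \<longrightarrow> minv (Ds j) e = 0)"
proof -
  let ?E = "facet_normals P" and ?I = "{1..r}"
  let ?m = "\<lambda>j. minv (Ds j) e"
  have "\<forall>j\<in>?I. \<exists>a. a \<in> Ds j \<and> a \<bullet> e = ?m j"
  proof
    fix j assume "j \<in> ?I"
    from D_min[OF this, of e] show "\<exists>a. a \<in> Ds j \<and> a \<bullet> e = ?m j" by blast
  qed
  from bchoice[OF this] obtain a where a: "\<forall>j\<in>?I. a j \<in> Ds j \<and> a j \<bullet> e = ?m j" by blast
  have "(\<Sum>j\<in>?I. a j) \<in> (\<Sum>j\<in>?I. Ds j)" using a by (intro sum_set_mem) auto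
  then have "(\<Sum>j\<in>?I. a j) \<in> P" by (simp only: P_facts(7)[symmetric])
  then have "-1 \<le> (\<Sum>j\<in>?I. a j) \<bullet> e" using P_facts(8) assms by blast
  also have "\<dots> = (\<Sum>j\<in>?I. ?m j)" using a by (simp add: inner_sum_left)
  finally have ge: "-1 \<le> (\<Sum>j\<in>?I. ?m j)" .
  have "\<forall>e'\<in>?E. -1 \<le> 0 \<bullet> e'" by simp
  moreover have "\<forall>e'\<in>?E. (0::real^'d) \<bullet> e' = -1 \<longrightarrow> 0 \<le> (-e) \<bullet> e'" by simp
  ultimately obtain t where t: "t > 0" "\<forall>e'\<in>?E. -1 \<le> (0 + t *\<^sub>R (-e)) \<bullet> e'"
    using perturb[OF P_facts(1), of "\<lambda>_. -1" 0 "-e"] by blast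
  then have "- (t *\<^sub>R e) \<in> P" using P_facts(8) by simp
  then have "- (t *\<^sub>R e) \<in> (\<Sum>j\<in>?I. Ds j)" by (simp only: P_facts(7)[symmetric])
  from sum_set_elim[OF finite_atLeastAtMost this]
  obtain b where b: "\<forall>j\<in>?I. b j \<in> Ds j" "- (t *\<^sub>R e) = (\<Sum>j\<in>?I. b j)"
    by blast
  have "(\<Sum>j\<in>?I. ?m j) \<le> (\<Sum>j\<in>?I. b j \<bullet> e)"
  proof (intro sum_mono)
    fix j assume j: "j \<in> ?I"
    from D_min[OF j, of e] obtain c where "\<forall>x\<in>Ds j. ?m j \<le> x \<bullet> e" by blast
    then show "?m j \<le> b j \<bullet> e" using b(1) j by blast
  qed
  also have "\<dots> = (\<Sum>j\<in>?I. b j) \<bullet> e" by (simp add: inner_sum_left)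
  also have "\<dots> = - t * (e \<bullet> e)" unfolding b(2)[symmetric] by simp
  also have "\<dots> < 0" using t(1) assms P_facts(2) by simp
  finally have lt: "(\<Sum>j\<in>?I. ?m j) < 0" .
  define Z where "Z = {j\<in>?I. ?m j = -1}"
  have "(\<Sum>j\<in>?I. ?m j) = (\<Sum>j\<in>?I. if j \<in> Z then -1 else 0)"
    using D_minv_vals[OF _ assms] unfolding Z_def by (intro sum.cong) auto
  also have "\<dots> = (\<Sum>j\<in>?I \<inter> Z. -1)" by (rule sum.inter_restrict[symmetric]) simp
  also have "?I \<inter> Z = Z" unfolding Z_def by blast
  finally have cz: "(\<Sum>j\<in>?I. ?m j) = - real (card Z)" by simp
  have "real (card Z) \<le> 1" "0 < real (card Z)" using ge lt cz by linarith+
  then have "card Z = 1" by linarith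
  then obtain k where Zk: "Z = {k}" by (rule card_1_singletonE)
  then have "k \<in> ?I" "?m k = -1" by (auto simp: Z_def)
  moreover have "\<forall>j\<in>?I. j \<noteq> k \<longrightarrow> ?m j = 0"
    using D_minv_vals[OF _ assms] Zk unfolding Z_def by blast
  ultimately show ?thesis by blast
qed

end

context
  fixes P :: "(real^'d) set" and Ds :: "nat \<Rightarrow> (real^'d) set" and r :: nat
  assumes refl: "reflexive_polytope P" and nef: "nef_partition P Ds r"
begin

lemmas PF = P_facts[OF refl nef]
lemmas DF = D_facts[OF refl nef]
lemmas DM = D_min[OF refl nef]
lemmas DV = D_minv_vals[OF refl nef]
lemmas UC = unique_class[OF refl nef]

lemma H1:
  assumes j: "j \<in> {1..r}"
  shows "Ds j = {x. \<forall>e\<in>facet_normals P. minv (Ds j) e \<le> x \<bullet> e}"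
proof
  show "Ds j \<subseteq> {x. \<forall>e\<in>facet_normals P. minv (Ds j) e \<le> x \<bullet> e}"
    using DM[OF j] by blast
  show "{x. \<forall>e\<in>facet_normals P. minv (Ds j) e \<le> x \<bullet> e} \<subseteq> Ds j"
  proof
    fix x assume x: "x \<in> {x. \<forall>e\<in>facet_normals P. minv (Ds j) e \<le> x \<bullet> e}"
    have sum: "Ds j + (\<Sum>k\<in>{1..r} - {j}. Ds k) = P"
      using sum.remove[OF finite_atLeastAtMost j, of Ds] by (simp only: PF(7))
    have hyp: "\<forall>e\<in>facet_normals P. \<exists>q\<in>Ds j. q \<bullet> e \<le> x \<bullet> e"
    proof
      fix e assume e: "e \<in> facet_normals P"
      from DM[OF j, of e] obtain a where "a \<in> Ds j" "a \<bullet> e = minv (Ds j) e" by blast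
      moreover have "minv (Ds j) e \<le> x \<bullet> e" using x e by blast
      ultimately show "\<exists>q\<in>Ds j. q \<bullet> e \<le> x \<bullet> e" by (intro bexI[of _ a]) auto
    qed
    show "x \<in> Ds j"
      by (rule summand_hrep[OF PF(1) DF(2)[OF j] compact_imp_closed[OF DF(1)[OF j]] sum PF(4) PF(5) PF(3) hyp])
  qed
qed

lemma zero_in_D:
  assumes j: "j \<in> {1..r}"
  shows "0 \<in> Ds j"
proof -
  have "\<forall>e\<in>facet_normals P. minv (Ds j) e \<le> 0 \<bullet> e" using DV[OF j] by fastforce
  then show ?thesis by (subst H1[OF j]) simp
qed

lemma Q_hrep:
  assumes J: "J \<subseteq> {1..r}" and i: "i \<in> J"
  shows "Ds i + (\<Sum>j\<in>J. Ds j) =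
    {x. \<forall>e\<in>facet_normals P. minv (Ds i) e + (\<Sum>j\<in>J. minv (Ds j) e) \<le> x \<bullet> e}"
    (is "?Q = ?H")
proof
  have fJ: "finite J" using J finite_subset by blast
  have iI: "i \<in> {1..r}" using J i by blast
  show "?Q \<subseteq> ?H"
  proof
    fix x assume "x \<in> ?Q"
    then obtain a b where ab: "x = a + b" "a \<in> Ds i" "b \<in> (\<Sum>j\<in>J. Ds j)" by (rule set_plus_elim)
    from sum_set_elim[OF fJ ab(3)] obtain c where c: "\<forall>j\<in>J. c j \<in> Ds j" "b = (\<Sum>j\<in>J. c j)" by blast
    show "x \<in> ?H"
    proof (rule CollectI, rule ballI)
      fix e assume e: "e \<in> facet_normals P"
      have "minv (Ds i) e \<le> a \<bullet> e" using DM[OF iI, of e] ab(2) by blast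
      moreover have "(\<Sum>j\<in>J. minv (Ds j) e) \<le> (\<Sum>j\<in>J. c j \<bullet> e)"
      proof (rule sum_mono)
        fix j assume j: "j \<in> J"
        then have jI: "j \<in> {1..r}" using J by blast
        show "minv (Ds j) e \<le> c j \<bullet> e" using DM[OF jI, of e] c(1) j by blast
      qed
      moreover have "x \<bullet> e = a \<bullet> e + (\<Sum>j\<in>J. c j \<bullet> e)"
        using ab(1) c(2) by (simp add: inner_add_left inner_sum_left)
      ultimately show "minv (Ds i) e + (\<Sum>j\<in>J. minv (Ds j) e) \<le> x \<bullet> e" by linarith
    qed
  qed
  show "?H \<subseteq> ?Q"
  proof
    fix x assume x: "x \<in> ?H"
    let ?I = "{1..r}"
    let ?B = "(\<Sum>j\<in>J - {i}. Ds j) + (\<Sum>j\<in>?I - J. Ds j) + (\<Sum>j\<in>?I - J. Ds j)"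
    have P1: "P = (\<Sum>j\<in>?I - J. Ds j) + (Ds i + (\<Sum>j\<in>J - {i}. Ds j))"
      using sum.subset_diff[OF J finite_atLeastAtMost, of Ds] sum.remove[OF fJ i, of Ds] PF(7) by simp
    have Q1: "?Q = Ds i + (Ds i + (\<Sum>j\<in>J - {i}. Ds j))"
      using sum.remove[OF fJ i, of Ds] by simp
    have sum: "?Q + ?B = P + P" unfolding Q1 P1 by (simp add: ac_simps)
    have allc: "\<forall>j\<in>J. compact (Ds j)" "\<forall>j\<in>J. convex (Ds j)" using DF J by blast+
    have cQ: "compact ?Q" using DF(1)[OF iI] compact_set_sum[OF fJ allc(1)] by (rule compact_set_plus)
    have vQ: "convex ?Q" using DF(2)[OF iI] convex_set_sum[OF fJ allc(2)] by (rule convex_set_plus)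
    have cPP: "compact (P + P)" using PF(4) PF(4) by (rule compact_set_plus)
    have nPP: "P + P \<noteq> {}" using PF(5) by (auto intro: set_plus_intro)
    have hPP: "P + P = {x. \<forall>e\<in>facet_normals P. -2 \<le> x \<bullet> e}"
    proof
      show "P + P \<subseteq> {x. \<forall>e\<in>facet_normals P. -2 \<le> x \<bullet> e}"
      proof
        fix y assume "y \<in> P + P"
        then obtain a b where "y = a + b" "a \<in> P" "b \<in> P" by (rule set_plus_elim)
        then show "y \<in> {x. \<forall>e\<in>facet_normals P. -2 \<le> x \<bullet> e}"
          using PF(8) by (force simp: inner_add_left)
      qed
      show "{x. \<forall>e\<in>facet_normals P. -2 \<le> x \<bullet> e} \<subseteq> P + P"
      proof
        fix y assume y: "y \<in> {x. \<forall>e\<in>facet_normals P. -2 \<le> x \<bullet> e}"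
        have "\<forall>e\<in>facet_normals P. -1 \<le> ((1/2) *\<^sub>R y) \<bullet> e" using y by auto
        then have half: "(1/2) *\<^sub>R y \<in> P" by (rule PF(8)[THEN iffD2])
        have "(1/2) *\<^sub>R y + (1/2) *\<^sub>R y \<in> P + P" by (rule set_plus_intro[OF half half])
        moreover have "(1/2) *\<^sub>R y + (1/2) *\<^sub>R y = y" by (simp add: scaleR_2[symmetric])
        ultimately show "y \<in> P + P" by simp
      qed
    qed
    have hyp: "\<forall>e\<in>facet_normals P. \<exists>q\<in>?Q. q \<bullet> e \<le> x \<bullet> e"
    proof
      fix e assume e: "e \<in> facet_normals P"
      have "\<forall>j\<in>?I. \<exists>a. a \<in> Ds j \<and> a \<bullet> e = minv (Ds j) e"
  proof
    fix j assume "j \<in> ?I"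
    from DM[OF this, of e] show "\<exists>a. a \<in> Ds j \<and> a \<bullet> e = minv (Ds j) e" by blast
  qed
      from bchoice[OF this] obtain a where a: "\<forall>j\<in>?I. a j \<in> Ds j \<and> a j \<bullet> e = minv (Ds j) e" by blast
      have "(\<Sum>j\<in>J. a j) \<in> (\<Sum>j\<in>J. Ds j)" using a J by (intro sum_set_mem[OF fJ]) blast
      then have "a i + (\<Sum>j\<in>J. a j) \<in> ?Q" using a iI by (intro set_plus_intro) auto
      moreover have "(a i + (\<Sum>j\<in>J. a j)) \<bullet> e = minv (Ds i) e + (\<Sum>j\<in>J. minv (Ds j) e)"
        using a iI J by (auto simp: inner_add_left inner_sum_left intro!: sum.cong)
      moreover have "minv (Ds i) e + (\<Sum>j\<in>J. minv (Ds j) e) \<le> x \<bullet> e" using x e by blast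
      ultimately show "\<exists>q\<in>?Q. q \<bullet> e \<le> x \<bullet> e" by (intro bexI[of _ "a i + (\<Sum>j\<in>J. a j)"]) auto
    qed
    show "x \<in> ?Q"
      by (rule summand_hrep[OF PF(1) vQ compact_imp_closed[OF cQ] sum cPP nPP hPP hyp])
  qed
qed

end

lemma neg_cone_closed:
  fixes S :: "'a::real_vector set"
  assumes "\<forall>s\<in>S. -s \<in> convex_cone hull S" "x \<in> convex_cone hull S"
  shows "-x \<in> convex_cone hull S"
proof -
  have "convex_cone {x. -x \<in> convex_cone hull S}"
  proof (rule convex_cone_iff[THEN iffD2], intro conjI ballI allI impI)
    show "0 \<in> {x. - x \<in> convex_cone hull S}" by (simp add: convex_cone_hull_contains_0)
  next
    fix x y assume "x \<in> {x. - x \<in> convex_cone hull S}" "y \<in> {x. - x \<in> convex_cone hull S}"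
    then have "-x + -y \<in> convex_cone hull S" by (intro convex_cone_hull_add) auto
    then show "x + y \<in> {x. - x \<in> convex_cone hull S}" by (simp add: add.commute)
  next
    fix x and c :: real assume "x \<in> {x. - x \<in> convex_cone hull S}" "0 \<le> c"
    then have "c *\<^sub>R (-x) \<in> convex_cone hull S" by (intro convex_cone_hull_mul) auto
    then show "c *\<^sub>R x \<in> {x. - x \<in> convex_cone hull S}" by simp
  qed
  then have "convex_cone hull S \<subseteq> {x. -x \<in> convex_cone hull S}"
    using assms(1) by (intro hull_minimal) auto
  then show ?thesis using assms(2) by auto
qed

lemma G1:
  fixes A S :: "'a::euclidean_space set"
  assumes "convex A" "0 \<in> A" "S \<subseteq> A" "A \<subseteq> convex_cone hull S"
    "\<forall>s\<in>S. -s \<in> convex_cone hull S"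
  shows "0 \<in> rel_interior A"
proof -
  have "A \<noteq> {}" using assms(2) by blast
  have "\<exists>e>1. (1 - e) *\<^sub>R x + e *\<^sub>R 0 \<in> A" if x: "x \<in> A" for x
  proof (cases "S = {}")
    case True
    then have "x = 0" using x assms(4) by (metis convex_cone_hull_empty singletonD subsetD)
    then show ?thesis using assms(2) by (intro exI[of _ 2]) simp
  next
    case False
    have "-x \<in> convex_cone hull S" using neg_cone_closed assms(4,5) x by blast
    then have "-x \<in> conic hull (convex hull S)" using convex_cone_hull_separate_nonempty[OF False] by simp
    then obtain c v where cv: "-x = c *\<^sub>R v" "0 \<le> c" "v \<in> convex hull S"
      unfolding conic_hull_explicit by blast
    have "convex hull S \<subseteq> A" using assms(3,1) by (rule hull_minimal)
    then have vA: "v \<in> A" using cv(3) by blast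
    define d where "d = 1 / (c + 1)"
    have d: "0 < d" "d * c \<le> 1" using cv(2) by (auto simp: d_def field_simps)
    have "(1 - d * c) *\<^sub>R 0 + (d * c) *\<^sub>R v \<in> A"
      using d cv(2) by (intro convexD[OF assms(1) assms(2) vA]) auto
    moreover have "(1 - (1 + d)) *\<^sub>R x + (1 + d) *\<^sub>R 0 = (1 - d * c) *\<^sub>R 0 + (d * c) *\<^sub>R v"
    proof -
      have "(1 - (1 + d)) *\<^sub>R x = d *\<^sub>R (-x)" by simp
      also have "\<dots> = (d * c) *\<^sub>R v" using cv(1) by simp
      finally show ?thesis by simp
    qed
    ultimately show ?thesis using d(1) by (intro exI[of _ "1 + d"]) auto
  qed
  then show ?thesis using convex_rel_interior_iff[OF assms(1) \<open>A \<noteq> {}\<close>] by blast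
qed

lemma G2:
  fixes A S :: "'a::euclidean_space set"
  assumes "0 \<in> rel_interior A" "S \<subseteq> A" "A \<subseteq> convex_cone hull S"
  shows "\<forall>s\<in>S. -s \<in> convex_cone hull S"
proof
  fix s assume s: "s \<in> S"
  obtain e where e: "e > 0" "ball 0 e \<inter> affine hull A \<subseteq> A"
    using assms(1) mem_rel_interior_ball by blast
  have "0 \<in> A" using assms(1) rel_interior_subset by blast
  then have aff: "affine hull A = span A" by (intro affine_hull_span_0) (simp add: hull_inc)
  define t where "t = e / (2 * (norm s + 1))"
  have "0 < 2 * (norm s + 1)" by (smt (verit) norm_ge_zero)
  then have t: "t > 0" using e(1) unfolding t_def by (intro divide_pos_pos)
  have "norm ((-t) *\<^sub>R s) < e"
  proof -
    have "norm ((-t) *\<^sub>R s) = t * norm s" using t by simp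
    also have "\<dots> = e * norm s / (2 * (norm s + 1))" by (simp add: t_def)
    also have "\<dots> < e"
    proof -
      have "e * norm s < e * (2 * (norm s + 1))"
        using e(1) by (intro mult_strict_left_mono) (smt (verit) norm_ge_zero)+
      then show ?thesis using \<open>0 < 2 * (norm s + 1)\<close> by (simp add: divide_less_eq)
    qed
    finally show ?thesis .
  qed
  moreover have "(-t) *\<^sub>R s \<in> span A" using s assms(2) by (intro span_mul span_base) blast
  ultimately have "(-t) *\<^sub>R s \<in> A" using e(2) aff by (auto simp: dist_norm)
  then have "(-t) *\<^sub>R s \<in> convex_cone hull S" using assms(3) by blast
  from convex_cone_hull_mul[OF this, of "1/t"]
  have "(1/t) *\<^sub>R ((-t) *\<^sub>R s) \<in> convex_cone hull S" using t by simp
  moreover have "(1/t) *\<^sub>R ((-t) *\<^sub>R s) = -s" using t by simp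
  ultimately show "-s \<in> convex_cone hull S" by simp
qed

lemma R1:
  fixes Q :: "'a::euclidean_space set"
  assumes "w \<in> rel_interior Q" "z \<in> Q" "\<forall>q\<in>Q. c \<le> q \<bullet> e" "c < z \<bullet> e"
  shows "c < w \<bullet> e"
proof (rule ccontr)
  assume "\<not> c < w \<bullet> e"
  moreover have "w \<in> Q" using assms(1) rel_interior_subset by blast
  ultimately have wc: "w \<bullet> e = c" using assms(3) by force
  obtain T where T: "open T" "w \<in> T" "T \<inter> affine hull Q \<subseteq> Q" using assms(1) mem_rel_interior by blast
  have "((\<lambda>t. w + t *\<^sub>R (w - z)) \<longlongrightarrow> w + 0 *\<^sub>R (w - z)) (at_right (0::real))"
    by (intro tendsto_intros)
  then have "eventually (\<lambda>t. w + t *\<^sub>R (w - z) \<in> T) (at_right (0::real))"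
    using T(1,2) by (intro topological_tendstoD) auto
  then have "eventually (\<lambda>t. 0 < t \<and> w + t *\<^sub>R (w - z) \<in> T) (at_right (0::real))"
    using eventually_at_right_less[of "0::real"] by (intro eventually_conj) auto
  then obtain t :: real where t: "0 < t" "w + t *\<^sub>R (w - z) \<in> T"
    using eventually_happens'[of "at_right (0::real)"] by auto
  have eq: "w + t *\<^sub>R (w - z) = (1 + t) *\<^sub>R w + (-t) *\<^sub>R z" by (simp add: algebra_simps)
  have "(1 + t) *\<^sub>R w + (-t) *\<^sub>R z \<in> affine hull Q"
    by (rule mem_affine[OF affine_affine_hull]) (use \<open>w \<in> Q\<close> assms(2) in \<open>auto intro: hull_inc\<close>)
  then have "w + t *\<^sub>R (w - z) \<in> Q" using T(3) t(2) eq by auto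
  then have "c \<le> (w + t *\<^sub>R (w - z)) \<bullet> e" using assms(3) by blast
  also have "\<dots> = c + t * (c - z \<bullet> e)" using wc by (simp add: inner_add_left inner_diff_left algebra_simps)
  finally have "0 \<le> t * (c - z \<bullet> e)" by simp
  moreover have "t * (c - z \<bullet> e) < 0" using t(1) assms(4) by (simp add: mult_pos_neg)
  ultimately show False by simp
qed

lemma Ints_lt_imp_le:
  fixes x c :: real
  assumes "x \<in> \<int>" "c \<in> \<int>" "c < x" shows "c + 1 \<le> x"
proof -
  obtain a b where "x = of_int a" "c = of_int b" using assms(1,2) by (metis Ints_cases)
  then show ?thesis using assms(3) by simp
qed

lemma cone_sum:
  fixes f :: "'i \<Rightarrow> 'a::real_vector"
  assumes "finite G" "\<forall>g\<in>G. f g \<in> convex_cone hull S"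
  shows "sum f G \<in> convex_cone hull S"
  using assms by (induction G rule: finite_induct)
    (auto simp: convex_cone_hull_contains_0 intro: convex_cone_hull_add)

lemma supp_phi_minv: "supp_phi K e = - minv K e"
  by (simp add: supp_phi_def minv_def)

context
  fixes P :: "(real^'d) set" and Ds :: "nat \<Rightarrow> (real^'d) set" and r :: nat
    and J :: "nat set" and i :: nat and w :: "real^'d"
  assumes refl: "reflexive_polytope P" and nef: "nef_partition P Ds r"
    and J: "J \<subseteq> {1..r}" and iJ: "i \<in> J" and lw: "lattice_pt w" and w0: "w \<noteq> 0"
begin

lemmas PFx = P_facts[OF refl nef]
lemmas DFx = D_facts[OF refl nef]
lemmas DMx = D_min[OF refl nef]
lemmas DVx = D_minv_vals[OF refl nef]
lemmas UCx = unique_class[OF refl nef]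
lemmas HH1 = H1[OF refl nef]
lemmas Z0 = zero_in_D[OF refl nef]
lemmas QH = Q_hrep[OF refl nef J iJ]

definition "mu e = minv (Ds i) e + (\<Sum>j\<in>J. minv (Ds j) e)"
definition "SS = {e \<in> facet_normals P. (\<exists>k\<in>{1..r} - J. minv (Ds k) e = -1) \<and> w \<bullet> e = 0}"

lemma iI: "i \<in> {1..r}" using J iJ by blast
lemma fJ: "finite J" using J finite_subset by blast

lemma QH': "x \<in> Ds i + (\<Sum>j\<in>J. Ds j) \<longleftrightarrow> (\<forall>e\<in>facet_normals P. mu e \<le> x \<bullet> e)"
  using QH unfolding mu_def by blast

lemma class_eq:
  assumes "e \<in> facet_normals P" "k \<in> {1..r}" "minv (Ds k) e = -1" "j \<in> {1..r}"
  shows "minv (Ds j) e = (if j = k then -1 else 0)"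
proof -
  obtain k' where k': "k' \<in> {1..r}" "minv (Ds k') e = -1" "\<forall>j\<in>{1..r}. j \<noteq> k' \<longrightarrow> minv (Ds j) e = 0"
    using UCx[OF assms(1)] by blast
  have "k = k'" using k'(3) assms(2,3) by force
  then show ?thesis using k' assms(4) by auto
qed

lemma mu_val:
  assumes "e \<in> facet_normals P" "k \<in> {1..r}" "minv (Ds k) e = -1"
  shows "mu e = (if k = i then -2 else if k \<in> J then -1 else 0)"
    and "minv (Ds i) e = (if k = i then -1 else 0)"
proof -
  have "(\<Sum>j\<in>J. minv (Ds j) e) = (\<Sum>j\<in>J. if j = k then -1 else 0)"
    using class_eq[OF assms] J by (intro sum.cong) auto
  also have "\<dots> = (if k \<in> J then -1 else 0)" using fJ by (simp add: sum.delta')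
  finally have s: "(\<Sum>j\<in>J. minv (Ds j) e) = (if k \<in> J then -1 else 0)" .
  show mi: "minv (Ds i) e = (if k = i then -1 else 0)" using class_eq[OF assms iI] by simp
  show "mu e = (if k = i then -2 else if k \<in> J then -1 else 0)"
    unfolding mu_def s mi using iJ by auto
qed

lemma class_ex:
  assumes "e \<in> facet_normals P"
  obtains k where "k \<in> {1..r}" "minv (Ds k) e = -1"
  using UCx[OF assms] by blast

lemma mu_Ints:
  assumes e: "e \<in> facet_normals P" shows "mu e \<in> \<int>"
proof -
  obtain k where k: "k \<in> {1..r}" "minv (Ds k) e = -1" using class_ex[OF e] by blast
  show ?thesis using mu_val(1)[OF e k] by simp
qed

lemma w_Ints: "e \<in> facet_normals P \<Longrightarrow> w \<bullet> e \<in> \<int>"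
  using lattice_inner_Ints[OF lw] PFx(2) by blast

lemma zero_Q: "0 \<in> Ds i + (\<Sum>j\<in>J. Ds j)"
proof -
  have "0 \<in> (\<Sum>j\<in>J. Ds j)" using zero_set_sum[OF fJ] Z0 J by blast
  then have "0 + 0 \<in> Ds i + (\<Sum>j\<in>J. Ds j)" using Z0[OF iI] by (intro set_plus_intro)
  then show ?thesis by simp
qed

lemma Di_Q: "w \<in> Ds i \<Longrightarrow> w \<in> Ds i + (\<Sum>j\<in>J. Ds j)"
proof -
  assume "w \<in> Ds i"
  moreover have "0 \<in> (\<Sum>j\<in>J. Ds j)" using zero_set_sum[OF fJ] Z0 J by blast
  ultimately have "w + 0 \<in> Ds i + (\<Sum>j\<in>J. Ds j)" by (intro set_plus_intro)
  then show ?thesis by simp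
qed

lemma Di_mem: "x \<in> Ds i \<longleftrightarrow> (\<forall>e\<in>facet_normals P. minv (Ds i) e \<le> x \<bullet> e)"
  using HH1[OF iI] by blast

lemma L_T:
  assumes "w \<in> Ds i"
  shows "\<forall>e\<in>facet_normals P. w \<bullet> e = mu e \<longrightarrow> e \<in> SS"
proof (intro ballI impI)
  fix e assume e: "e \<in> facet_normals P" and eq: "w \<bullet> e = mu e"
  obtain k where k: "k \<in> {1..r}" "minv (Ds k) e = -1" using class_ex[OF e] by blast
  have le: "minv (Ds i) e \<le> w \<bullet> e" using assms e Di_mem by blast
  have "k \<notin> J"
  proof
    assume "k \<in> J"
    then show False using mu_val[OF e k] le eq by (auto split: if_splits)
  qed
  moreover have "mu e = 0" using mu_val[OF e k] \<open>k \<notin> J\<close> iJ by auto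
  ultimately show "e \<in> SS" unfolding SS_def using e k eq by auto
qed

lemma SS_mu: "e \<in> SS \<Longrightarrow> mu e = 0"
proof -
  assume "e \<in> SS"
  then obtain k where "e \<in> facet_normals P" "k \<in> {1..r} - J" "minv (Ds k) e = -1"
    unfolding SS_def by blast
  then show "mu e = 0" using mu_val[of e k] iJ by auto
qed

lemma SS_fin: "finite SS"
  using PFx(1) unfolding SS_def by simp

lemma F1:
  assumes "w \<in> rel_interior (Ds i + (\<Sum>j\<in>J. Ds j))"
  shows "w \<in> Ds i"
proof -
  let ?Q = "Ds i + (\<Sum>j\<in>J. Ds j)"
  have wQ: "w \<in> ?Q" using assms rel_interior_subset by blast
  have "\<forall>e\<in>facet_normals P. minv (Ds i) e \<le> w \<bullet> e"
  proof
    fix e assume e: "e \<in> facet_normals P"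
    obtain k where k: "k \<in> {1..r}" "minv (Ds k) e = -1" using class_ex[OF e] by blast
    have allQ: "\<forall>q\<in>?Q. mu e \<le> q \<bullet> e" using QH' e by blast
    have strict: "mu e < w \<bullet> e" if "mu e < 0"
      using R1[OF assms zero_Q allQ] that by simp
    show "minv (Ds i) e \<le> w \<bullet> e"
    proof (cases "k \<in> J")
      case True
      then have "mu e < 0" using mu_val(1)[OF e k] by auto
      then have "mu e + 1 \<le> w \<bullet> e" using strict Ints_lt_imp_le w_Ints mu_Ints e by blast
      then show ?thesis using mu_val[OF e k] True by (auto split: if_splits)
    next
      case False
      then have "mu e = 0" "minv (Ds i) e = 0" using mu_val[OF e k] iJ by auto
      then show ?thesis using wQ QH' e by auto
    qed
  qed
  then show ?thesis using Di_mem by blast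
qed

lemma F2:
  assumes wi: "w \<in> Ds i"
  shows "w \<in> frontier (nabla_star Ds r)"
proof -
  let ?N = "nabla_star Ds r"
  have cU: "compact (\<Union>j\<in>{1..r}. Ds j)" using DFx(1) by (intro compact_UN) auto
  have cN: "compact ?N" unfolding nabla_star_def by (rule compact_convex_hull[OF cU])
  have wN: "w \<in> ?N" unfolding nabla_star_def using wi iI by (intro hull_inc) blast
  have "\<exists>e\<in>facet_normals P. w \<bullet> e < 0"
  proof (rule ccontr)
    assume "\<not> (\<exists>e\<in>facet_normals P. w \<bullet> e < 0)"
    then have nn: "\<forall>e\<in>facet_normals P. 0 \<le> w \<bullet> e" by auto
    obtain B where B: "\<forall>x\<in>P. norm x \<le> B" using compact_imp_bounded[OF PFx(4)] bounded_iff by blast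
    define t where "t = (\<bar>B\<bar> + 1) / norm w"
    have t: "t \<ge> 0" using w0 by (simp add: t_def)
    have "\<forall>e\<in>facet_normals P. -1 \<le> (t *\<^sub>R w) \<bullet> e"
    proof
      fix e assume "e \<in> facet_normals P"
      then have "0 \<le> t * (w \<bullet> e)" using nn t by simp
      then show "-1 \<le> (t *\<^sub>R w) \<bullet> e" by simp
    qed
    then have "t *\<^sub>R w \<in> P" using PFx(8) by blast
    then have "norm (t *\<^sub>R w) \<le> B" using B by blast
    moreover have "norm (t *\<^sub>R w) = \<bar>B\<bar> + 1" using w0 by (simp add: t_def)
    ultimately show False by linarith
  qed
  then obtain e where e: "e \<in> facet_normals P" "w \<bullet> e < 0" by blast
  have "w \<bullet> e + 1 \<le> 0" using Ints_lt_imp_le[OF _ w_Ints[OF e(1)] e(2)] by simp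
  moreover have "minv (Ds i) e \<le> w \<bullet> e" using wi e(1) Di_mem by blast
  moreover have "minv (Ds i) e = 0 \<or> minv (Ds i) e = -1" using DVx[OF iI e(1)] .
  ultimately have we: "w \<bullet> e = -1" by linarith
  have "?N \<subseteq> {x. -1 \<le> x \<bullet> e}"
    unfolding nabla_star_def
  proof (rule hull_minimal)
    show "(\<Union>j\<in>{1..r}. Ds j) \<subseteq> {x. -1 \<le> x \<bullet> e}"
    proof
      fix x assume "x \<in> (\<Union>j\<in>{1..r}. Ds j)"
      then obtain j where j: "j \<in> {1..r}" "x \<in> Ds j" by blast
      have "minv (Ds j) e \<le> x \<bullet> e" using DMx[OF j(1), of e] j(2) by blast
      moreover have "minv (Ds j) e = 0 \<or> minv (Ds j) e = -1" using DVx[OF j(1) e(1)] .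
      ultimately show "x \<in> {x. -1 \<le> x \<bullet> e}" by auto
    qed
    have "{x. -1 \<le> x \<bullet> e} = {x. inner e x \<ge> -1}" by (auto simp: inner_commute)
    then show "convex {x. -1 \<le> x \<bullet> e}" using convex_halfspace_ge[of "-1" e] by simp
  qed
  have "w \<notin> interior ?N"
  proof
    assume "w \<in> interior ?N"
    then obtain d where d: "d > 0" "ball w d \<subseteq> ?N" using mem_interior by blast
    have en: "e \<noteq> 0" using PFx(2) e(1) by blast
    define y where "y = w - (d / 2 / norm e) *\<^sub>R e"
    have "dist w y = d / 2" using en d(1) by (simp add: y_def dist_norm)
    then have "y \<in> ?N" using d by auto
    then have "-1 \<le> y \<bullet> e" using \<open>?N \<subseteq> {x. -1 \<le> x \<bullet> e}\<close> by blast
    moreover have "y \<bullet> e = -1 - (d / 2 / norm e) * (e \<bullet> e)"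
      using we by (simp add: y_def inner_diff_left)
    moreover have "(d / 2 / norm e) * (e \<bullet> e) > 0" using en d(1) by simp
    ultimately show False by linarith
  qed
  then show ?thesis using wN cN unfolding frontier_def by (simp add: compact_imp_closed)
qed

lemma F3:
  assumes "w \<in> rel_interior (Ds i + (\<Sum>j\<in>J. Ds j))"
  shows "\<forall>e\<in>SS. \<forall>q\<in>Ds i + (\<Sum>j\<in>J. Ds j). q \<bullet> e = 0"
proof (intro ballI)
  fix e q assume e: "e \<in> SS" and q: "q \<in> Ds i + (\<Sum>j\<in>J. Ds j)"
  have eE: "e \<in> facet_normals P" and we: "w \<bullet> e = 0" using e unfolding SS_def by auto
  have allQ: "\<forall>q\<in>Ds i + (\<Sum>j\<in>J. Ds j). 0 \<le> q \<bullet> e"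
  proof
    fix q assume "q \<in> Ds i + (\<Sum>j\<in>J. Ds j)"
    then have "mu e \<le> q \<bullet> e" using QH' eE by blast
    then show "0 \<le> q \<bullet> e" using SS_mu[OF e] by simp
  qed
  have "\<not> 0 < q \<bullet> e" using R1[OF assms q allQ] we by auto
  then show "q \<bullet> e = 0" using allQ q by force
qed

lemma F4:
  assumes rel: "w \<in> rel_interior (Ds i + (\<Sum>j\<in>J. Ds j))"
  shows "\<forall>e\<in>SS. -e \<in> convex_cone hull SS"
proof (rule ballI, rule ccontr)
  fix e assume e: "e \<in> SS" and ne: "-e \<notin> convex_cone hull SS"
  obtain a where a: "a \<bullet> (-e) < 0" "\<forall>s\<in>SS. 0 \<le> a \<bullet> s"
    using separate_cone[OF SS_fin ne] by blast
  have wi: "w \<in> Ds i" using F1[OF rel] .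
  have wQ: "\<forall>e\<in>facet_normals P. mu e \<le> w \<bullet> e" using Di_Q[OF wi] QH' by blast
  have "\<forall>e\<in>facet_normals P. w \<bullet> e = mu e \<longrightarrow> 0 \<le> a \<bullet> e"
    using L_T[OF wi] a(2) by blast
  then obtain t where t: "t > 0" "\<forall>e\<in>facet_normals P. mu e \<le> (w + t *\<^sub>R a) \<bullet> e"
    using perturb[OF PFx(1) wQ] by metis
  have "w + t *\<^sub>R a \<in> Ds i + (\<Sum>j\<in>J. Ds j)" using t(2) QH' by blast
  then have "(w + t *\<^sub>R a) \<bullet> e = 0" using F3[OF rel] e by blast
  moreover have "w \<bullet> e = 0" using e unfolding SS_def by auto
  moreover have "t * (a \<bullet> e) > 0" using t(1) a(1) by simp
  moreover have "(w + t *\<^sub>R a) \<bullet> e = w \<bullet> e + t * (a \<bullet> e)" by (simp add: inner_add_left)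
  ultimately show False by linarith
qed

lemma wnn:
  assumes wi: "w \<in> Ds i" and j: "j \<in> {1..r} - J" and e: "e \<in> facet_normals P"
    and m: "minv (Ds j) e = -1"
  shows "0 \<le> w \<bullet> e"
proof -
  have jI: "j \<in> {1..r}" using j by blast
  have "j \<noteq> i" using j iJ by blast
  then have "minv (Ds i) e = 0" using mu_val(2)[OF e jI m] by simp
  then show ?thesis using wi e Di_mem by force
qed

lemma nabla_gen: "nabla P Ds j = convex hull ({0} \<union> {e\<in>facet_normals P. minv (Ds j) e = -1})"
  unfolding nabla_def supp_phi_minv by (metis (no_types, opaque_lifting) minus_equation_iff)

lemma nabla_nonneg:
  assumes wi: "w \<in> Ds i" and j: "j \<in> {1..r} - J"
  shows "nabla P Ds j \<subseteq> {y. 0 \<le> w \<bullet> y}"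
  unfolding nabla_gen
proof (rule hull_minimal)
  show "{0} \<union> {e \<in> facet_normals P. minv (Ds j) e = - 1} \<subseteq> {y. 0 \<le> w \<bullet> y}"
    using wnn[OF wi j] by auto
  show "convex {y. 0 \<le> w \<bullet> y}" using convex_halfspace_ge[of 0 w] by simp
qed

lemma face_eq:
  assumes wi: "w \<in> Ds i" and j: "j \<in> {1..r} - J"
  shows "nabla_face P Ds j w = nabla P Ds j \<inter> {y. w \<bullet> y \<le> 0}"
proof -
  have z: "0 \<in> nabla P Ds j" unfolding nabla_gen by (intro hull_inc) simp
  show ?thesis unfolding nabla_face_def using nabla_nonneg[OF wi j] z by force
qed

lemma face_convex:
  assumes wi: "w \<in> Ds i" and j: "j \<in> {1..r} - J"
  shows "convex (nabla_face P Ds j w)"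
  unfolding face_eq[OF wi j] nabla_def
  by (intro convex_Int convex_convex_hull) (simp add: convex_halfspace_le)

lemma face_zero:
  assumes wi: "w \<in> Ds i" and j: "j \<in> {1..r} - J"
  shows "0 \<in> nabla_face P Ds j w"
  unfolding face_eq[OF wi j] nabla_gen by (auto intro: hull_inc)

lemma face_S:
  assumes wi: "w \<in> Ds i" and j: "j \<in> {1..r} - J" and e: "e \<in> SS" and m: "minv (Ds j) e = -1"
  shows "e \<in> nabla_face P Ds j w"
  using e m unfolding face_eq[OF wi j] nabla_gen SS_def by (auto intro: hull_inc)

lemma face_cone:
  assumes wi: "w \<in> Ds i" and j: "j \<in> {1..r} - J"
  shows "nabla_face P Ds j w \<subseteq> convex_cone hull SS"
proof
  fix y assume y: "y \<in> nabla_face P Ds j w"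
  let ?G = "{0} \<union> {e\<in>facet_normals P. minv (Ds j) e = -1}"
  have fG: "finite ?G" using PFx(1) by simp
  have yN: "y \<in> convex hull ?G" and wy: "w \<bullet> y \<le> 0"
    using y unfolding face_eq[OF wi j] nabla_gen by auto
  have "0 \<le> w \<bullet> y" using nabla_nonneg[OF wi j] y unfolding face_eq[OF wi j] by blast
  then have wy0: "w \<bullet> y = 0" using wy by simp
  obtain u where u: "\<forall>x\<in>?G. 0 \<le> u x" "sum u ?G = 1" "(\<Sum>x\<in>?G. u x *\<^sub>R x) = y"
    using yN unfolding convex_hull_finite[OF fG] by blast
  have gnn: "\<forall>g\<in>?G. 0 \<le> w \<bullet> g" using wnn[OF wi j] by auto
  have "w \<bullet> y = (\<Sum>g\<in>?G. w \<bullet> (u g *\<^sub>R g))" unfolding u(3)[symmetric] by (rule inner_sum_right)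
  then have "(\<Sum>g\<in>?G. u g * (w \<bullet> g)) = w \<bullet> y" by simp
  then have "(\<Sum>g\<in>?G. u g * (w \<bullet> g)) = 0" using wy0 by simp
  moreover have nn: "\<forall>g\<in>?G. 0 \<le> u g * (w \<bullet> g)" using u(1) gnn by (simp add: mult_nonneg_nonneg)
  ultimately have zero: "\<forall>g\<in>?G. u g * (w \<bullet> g) = 0"
    using sum_nonneg_eq_0_iff[OF fG, of "\<lambda>g. u g * (w \<bullet> g)"] by blast
  have "\<forall>g\<in>?G. u g *\<^sub>R g \<in> convex_cone hull SS"
  proof
    fix g assume g: "g \<in> ?G"
    show "u g *\<^sub>R g \<in> convex_cone hull SS"
    proof (cases "u g = 0 \<or> g = 0")
      case True
      then show ?thesis by (auto simp: convex_cone_hull_contains_0)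
    next
      case False
      then have "w \<bullet> g = 0" using zero g by auto
      then have "g \<in> SS" using g False j unfolding SS_def by auto
      then show ?thesis using u(1) g by (intro convex_cone_hull_mul hull_inc) auto
    qed
  qed
  from cone_sum[OF fG this] show "y \<in> convex_cone hull SS" using u(3) by simp
qed

abbreviation "AA \<equiv> (\<Sum>j\<in>{1..r} - J. nabla_face P Ds j w)"

lemma A_facts:
  assumes wi: "w \<in> Ds i"
  shows "convex AA" "0 \<in> AA" "SS \<subseteq> AA" "AA \<subseteq> convex_cone hull SS"
proof -
  have fK: "finite ({1..r} - J)" by simp
  show "convex AA" using face_convex[OF wi] by (intro convex_set_sum[OF fK]) blast
  have zs: "\<forall>j\<in>{1..r} - J. 0 \<in> nabla_face P Ds j w" using face_zero[OF wi] by blast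
  show "0 \<in> AA" using zero_set_sum[OF fK zs] .
  show "SS \<subseteq> AA"
  proof
    fix e assume e: "e \<in> SS"
    then obtain k where k: "k \<in> {1..r} - J" "minv (Ds k) e = -1" unfolding SS_def by blast
    have "e \<in> nabla_face P Ds k w" using face_S[OF wi k(1) e k(2)] .
    then show "e \<in> AA" using subset_set_sum[OF fK zs k(1)] by blast
  qed
  show "AA \<subseteq> convex_cone hull SS"
  proof
    fix x assume "x \<in> AA"
    from sum_set_elim[OF fK this] obtain a where a: "\<forall>j\<in>{1..r} - J. a j \<in> nabla_face P Ds j w"
      "x = (\<Sum>j\<in>{1..r} - J. a j)" by blast
    have "\<forall>j\<in>{1..r} - J. a j \<in> convex_cone hull SS" using a(1) face_cone[OF wi] by blast
    from cone_sum[OF fK this] show "x \<in> convex_cone hull SS" using a(2) by simp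
  qed
qed

abbreviation "QQ \<equiv> Ds i + (\<Sum>j\<in>J. Ds j)"
abbreviation "OrthS \<equiv> {y. \<forall>x\<in>SS. orthogonal x y}"

lemma F5:
  assumes rel: "w \<in> rel_interior QQ"
  shows "span QQ = OrthS"
proof
  show "span QQ \<subseteq> OrthS"
  proof (rule span_minimal)
    show "QQ \<subseteq> OrthS"
    proof
      fix q assume q: "q \<in> QQ"
      have "\<forall>s\<in>SS. s \<bullet> q = 0" using F3[OF rel] q by (metis inner_commute)
      then show "q \<in> OrthS" by (simp add: orthogonal_def)
    qed
    show "subspace OrthS" by (rule subspace_orthogonal_to_vectors)
  qed
  show "OrthS \<subseteq> span QQ"
  proof
    fix x assume x: "x \<in> OrthS"
    have wi: "w \<in> Ds i" using F1[OF rel] .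
    have wQ: "\<forall>e\<in>facet_normals P. mu e \<le> w \<bullet> e" using Di_Q[OF wi] QH' by blast
    have "\<forall>e\<in>facet_normals P. w \<bullet> e = mu e \<longrightarrow> 0 \<le> x \<bullet> e"
      using L_T[OF wi] x by (auto simp: orthogonal_def inner_commute)
    then obtain t where t: "t > 0" "\<forall>e\<in>facet_normals P. mu e \<le> (w + t *\<^sub>R x) \<bullet> e"
      using perturb[OF PFx(1) wQ] by metis
    have "w + t *\<^sub>R x \<in> QQ" using t(2) QH' by blast
    moreover have "w \<in> QQ" using Di_Q[OF wi] .
    ultimately have "(1/t) *\<^sub>R ((w + t *\<^sub>R x) - w) \<in> span QQ"
      by (intro span_mul span_diff span_base)
    then show "x \<in> span QQ" using t(1) by simp
  qed
qed

lemma F6: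
  assumes rel: "w \<in> rel_interior QQ"
  shows "aff_dim QQ + aff_dim AA = int CARD('d)"
proof -
  have wi: "w \<in> Ds i" using F1[OF rel] .
  note AF = A_facts[OF wi]
  have "aff_dim QQ = int (dim QQ)" using zero_Q by (intro aff_dim_zero) (simp add: hull_inc)
  also have "dim QQ = dim OrthS" using F5[OF rel] by (metis dim_span)
  finally have dQ: "aff_dim QQ = int (dim OrthS)" .
  have "aff_dim AA = int (dim AA)" using AF(2) by (intro aff_dim_zero) (simp add: hull_inc)
  moreover have "span AA = span SS"
  proof
    show "span SS \<subseteq> span AA" using AF(3) by (rule span_mono)
    have "convex_cone (span SS)" unfolding convex_cone_iff
      by (simp add: span_0 span_add span_mul)
    then have "convex_cone hull SS \<subseteq> span SS" by (intro hull_minimal) (auto intro: span_base)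
    then have "AA \<subseteq> span SS" using AF(4) by blast
    then show "span AA \<subseteq> span SS" by (intro span_minimal) auto
  qed
  ultimately have dA: "aff_dim AA = int (dim (span SS))" by (metis dim_span)
  have "dim {y \<in> UNIV. \<forall>x\<in>span SS. orthogonal x y} + dim (span SS) = dim (UNIV :: (real^'d) set)"
    by (rule dim_subspace_orthogonal_to_vectors) auto
  moreover have "{y \<in> UNIV. \<forall>x\<in>span SS. orthogonal x y} = OrthS"
  proof
    show "{y \<in> UNIV. \<forall>x\<in>span SS. orthogonal x y} \<subseteq> OrthS" by (auto intro: span_base)
    show "OrthS \<subseteq> {y \<in> UNIV. \<forall>x\<in>span SS. orthogonal x y}"
    proof
      fix y assume y: "y \<in> OrthS"
      have "span SS \<subseteq> {x. orthogonal x y}"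
      proof (rule span_minimal)
        show "SS \<subseteq> {x. orthogonal x y}" using y by auto
        show "subspace {x. orthogonal x y}"
          using subspace_orthogonal_to_vector[of y] by (simp add: orthogonal_commute)
      qed
      then show "y \<in> {y \<in> UNIV. \<forall>x\<in>span SS. orthogonal x y}" by auto
    qed
  qed
  ultimately have "dim OrthS + dim (span SS) = CARD('d)" by simp
  then show ?thesis using dQ dA by simp
qed

lemma B1:
  assumes wi: "w \<in> Ds i" and rel: "0 \<in> rel_interior AA"
  shows "w \<in> rel_interior QQ"
proof -
  note AF = A_facts[OF wi]
  have neg: "\<forall>s\<in>SS. -s \<in> convex_cone hull SS" using G2[OF rel AF(3,4)] .
  have orth: "\<forall>s\<in>SS. \<forall>q\<in>QQ. q \<bullet> s = 0"
  proof (intro ballI)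
    fix s q assume s: "s \<in> SS" and q: "q \<in> QQ"
    have sE: "s \<in> facet_normals P" using s unfolding SS_def by blast
    have q0: "\<forall>e\<in>SS. 0 \<le> q \<bullet> e"
    proof
      fix e assume e: "e \<in> SS"
      then have "e \<in> facet_normals P" unfolding SS_def by blast
      then have "mu e \<le> q \<bullet> e" using q QH' by blast
      then show "0 \<le> q \<bullet> e" using SS_mu[OF e] by simp
    qed
    have "0 \<le> q \<bullet> (-s)" using convex_cone_hull_ge[of "-s" SS q] neg s q0 by blast
    then show "q \<bullet> s = 0" using q0 s by force
  qed
  let ?T = "\<Inter>e\<in>facet_normals P - SS. {y. mu e < y \<bullet> e}"
  have oT: "open ?T"
  proof (rule open_INT)
    show "finite (facet_normals P - SS)" using PFx(1) by simp
    show "\<forall>e\<in>facet_normals P - SS. open {y. mu e < y \<bullet> e}"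
    proof
      fix e
      have "{y. mu e < y \<bullet> e} = {y. inner e y > mu e}" by (simp add: inner_commute)
      then show "open {y. mu e < y \<bullet> e}" using open_halfspace_gt[where a=e and b="mu e"] by simp
    qed
  qed
  have wQ: "w \<in> QQ" using Di_Q[OF wi] .
  have wT: "w \<in> ?T"
  proof -
    have "\<forall>e\<in>facet_normals P - SS. mu e < w \<bullet> e"
    proof
      fix e assume e: "e \<in> facet_normals P - SS"
      have "mu e \<le> w \<bullet> e" using wQ QH' e by blast
      moreover have "w \<bullet> e \<noteq> mu e" using L_T[OF wi] e by blast
      ultimately show "mu e < w \<bullet> e" by simp
    qed
    then show ?thesis by blast
  qed
  have aff: "affine hull QQ \<subseteq> OrthS"
  proof (rule hull_minimal)
    show "QQ \<subseteq> OrthS"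
    proof
      fix q assume q: "q \<in> QQ"
      have "\<forall>s\<in>SS. s \<bullet> q = 0" using orth q by (metis inner_commute)
      then show "q \<in> OrthS" by (simp add: orthogonal_def)
    qed
    show "affine OrthS" by (intro subspace_imp_affine subspace_orthogonal_to_vectors)
  qed
  have "?T \<inter> affine hull QQ \<subseteq> QQ"
  proof
    fix y assume y: "y \<in> ?T \<inter> affine hull QQ"
    have "\<forall>e\<in>facet_normals P. mu e \<le> y \<bullet> e"
    proof
      fix e assume e: "e \<in> facet_normals P"
      show "mu e \<le> y \<bullet> e"
      proof (cases "e \<in> SS")
        case True
        have "orthogonal e y" using y aff True by blast
        then show ?thesis using SS_mu[OF True] by (simp add: orthogonal_def inner_commute)
      next
        case False
        then show ?thesis using y e by force
      qed
    qed
    then show "y \<in> QQ" using QH' by blast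
  qed
  then show ?thesis unfolding mem_rel_interior using oT wT wQ by blast
qed

lemma main:
  shows "(w \<in> rel_interior QQ \<longleftrightarrow> w \<in> Delta0 Ds r i \<and> 0 \<in> rel_interior AA)
       \<and> (w \<in> rel_interior QQ \<longrightarrow> aff_dim QQ + aff_dim AA = int CARD('d))"
proof (intro conjI impI)
  show "w \<in> rel_interior QQ \<Longrightarrow> aff_dim QQ + aff_dim AA = int CARD('d)" by (rule F6)
  show "w \<in> rel_interior QQ \<longleftrightarrow> w \<in> Delta0 Ds r i \<and> 0 \<in> rel_interior AA"
  proof
    assume rel: "w \<in> rel_interior QQ"
    have wi: "w \<in> Ds i" using F1[OF rel] .
    have "w \<in> Delta0 Ds r i" unfolding Delta0_def using wi F2[OF wi] lw by blast
    moreover have "0 \<in> rel_interior AA"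
      using A_facts[OF wi] F4[OF rel] by (intro G1) auto
    ultimately show "w \<in> Delta0 Ds r i \<and> 0 \<in> rel_interior AA" by blast
  next
    assume h: "w \<in> Delta0 Ds r i \<and> 0 \<in> rel_interior AA"
    then have "w \<in> Ds i" unfolding Delta0_def by blast
    then show "w \<in> rel_interior QQ" using B1 h by blast
  qed
qed

end

theorem mainTheorem15:
  fixes P :: "(real^'d) set" and Ds :: "nat \<Rightarrow> (real^'d) set"
    and r i :: nat and J :: "nat set" and w :: "real^'d"
  assumes "reflexive_polytope P"
    and "nef_partition P Ds r"
    and "J \<subseteq> {1..r}" and "i \<in> J"
    and "lattice_pt w" and "w \<noteq> 0"
  shows "(w \<in> rel_interior (Ds i + (\<Sum>j\<in>J. Ds j)) \<longleftrightarrow>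
           w \<in> Delta0 Ds r i \<and>
           0 \<in> rel_interior (\<Sum>j\<in>{1..r} - J. nabla_face P Ds j w))
       \<and> (w \<in> rel_interior (Ds i + (\<Sum>j\<in>J. Ds j)) \<longrightarrow>
           aff_dim (Ds i + (\<Sum>j\<in>J. Ds j))
             + aff_dim (\<Sum>j\<in>{1..r} - J. nabla_face P Ds j w) = int CARD('d))"
  using main[OF assms] .

end
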